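(* Consider the model $X\sim\mathbb{P}^X$, $\mu\mid X\sim N(m(X),A)$, $Z\mid\mu\sim N(\mu,\sigma^2)$ with $A\ge0$, $\sigma>0$, and let $(X_{n+1},\mu_{n+1},Z_{n+1})$ be a draw from it. Fix any deterministic function $\tilde m:\mathcal{X}\to\mathbb{R}$ and define $A_{\tilde m}:=\mathbb{E}_{m,A}[(\tilde m(X_{n+1})-Z_{n+1})^2]-\sigma^2$. Then $$\mathbb{E}_{m,A}\big[(t^*_{\tilde m,A_{\tilde m}}(X_{n+1},Z_{n+1})-\mu_{n+1})^2\big]=\inf_{\tilde A\ge0}\mathbb{E}_{m,A}\big[(t^*_{\tilde m,\tilde A}(X_{n+1},Z_{n+1})-\mu_{n+1})^2\big]=\frac{\sigma^2A_{\tilde m}}{\sigma^2+A_{\tilde m}}.$$ In particular, $\mathbb{E}_{m,A}[(t^*_{\tilde m,A_{\tilde m}}(X_{n+1},Z_{n+1})-\mu_{n+1})^2]\le\mathbb{E}_{m,A}[(t^*_{\tilde m,A}(X_{n+1},Z_{n+1})-\mu_{n+1})^2]$.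
   Context: For a function $\tilde m$ and $\tilde A\ge0$, $t^*_{\tilde m,\tilde A}(x,z)=\frac{\tilde A}{\sigma^2+\tilde A}z+\frac{\sigma^2}{\sigma^2+\tilde A}\tilde m(x)$. *)

theory Defs
  imports "HOL-Probability.Probability"
begin

definition tstar :: "real \<Rightarrow> ('x \<Rightarrow> real) \<Rightarrow> real \<Rightarrow> 'x \<Rightarrow> real \<Rightarrow> real" where
  "tstar \<sigma> mt At x z = At / (\<sigma>\<^sup>2 + At) * z + \<sigma>\<^sup>2 / (\<sigma>\<^sup>2 + At) * mt x"

definition std_normal :: "real measure" where
  "std_normal = density lborel std_normal_density"

text \<open>Underlying probability space of the model: (X, xi, eta) with X ~ P^X and xi, eta i.i.d. N(0,1),
  independent of X. Then mu = m(X) + sqrt A * xi satisfies mu | X ~ N(m(X), A) (degenerate if A = 0)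
  and Z = mu + sigma * eta satisfies Z | mu ~ N(mu, sigma^2).\<close>
definition model_space :: "'x measure \<Rightarrow> ('x \<times> real \<times> real) measure" where
  "model_space PX = PX \<Otimes>\<^sub>M (std_normal \<Otimes>\<^sub>M std_normal)"

definition model_X :: "'x \<times> real \<times> real \<Rightarrow> 'x" where
  "model_X \<omega> = fst \<omega>"

definition model_mu :: "('x \<Rightarrow> real) \<Rightarrow> real \<Rightarrow> 'x \<times> real \<times> real \<Rightarrow> real" where
  "model_mu m A \<omega> = m (fst \<omega>) + sqrt A * fst (snd \<omega>)"

definition model_Z :: "('x \<Rightarrow> real) \<Rightarrow> real \<Rightarrow> real \<Rightarrow> 'x \<times> real \<times> real \<Rightarrow> real" where
  "model_Z m A \<sigma> \<omega> = model_mu m A \<omega> + \<sigma> * snd (snd \<omega>)"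

definition model_expect ::
  "'x measure \<Rightarrow> ('x \<Rightarrow> real) \<Rightarrow> real \<Rightarrow> real \<Rightarrow> ('x \<Rightarrow> real \<Rightarrow> real \<Rightarrow> real) \<Rightarrow> real" where
  "model_expect PX m A \<sigma> g =
     (\<integral>\<omega>. g (model_X \<omega>) (model_mu m A \<omega>) (model_Z m A \<sigma> \<omega>) \<partial>model_space PX)"

end

theory Submission imports Defs begin

lemma prod_mult:
  fixes f :: "'a \<Rightarrow> real" and g :: "'b \<Rightarrow> real"
  assumes M1: "prob_space M1" and M2: "prob_space M2"
    and f: "integrable M1 f" and g: "integrable M2 g"
  shows "integrable (M1 \<Otimes>\<^sub>M M2) (\<lambda>\<omega>. f (fst \<omega>) * g (snd \<omega>))"
    and "(\<integral>\<omega>. f (fst \<omega>) * g (snd \<omega>) \<partial>(M1 \<Otimes>\<^sub>M M2)) = integral\<^sup>L M1 f * integral\<^sup>L M2 g"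
proof -
  interpret P1: prob_space M1 by (rule M1)
  interpret P2: prob_space M2 by (rule M2)
  interpret P: pair_sigma_finite M1 M2 ..
  have fm[measurable]: "f \<in> borel_measurable M1" using f by auto
  have gm[measurable]: "g \<in> borel_measurable M2" using g by auto
  have "(\<integral>\<^sup>+ \<omega>. ennreal (norm (f (fst \<omega>) * g (snd \<omega>))) \<partial>(M1 \<Otimes>\<^sub>M M2))
      = (\<integral>\<^sup>+ x. \<integral>\<^sup>+ y. ennreal (norm (f x)) * ennreal (norm (g y)) \<partial>M2 \<partial>M1)"
    by (subst P2.nn_integral_fst[symmetric]) (auto simp: abs_mult ennreal_mult)
  also have "\<dots> = (\<integral>\<^sup>+ x. ennreal (norm (f x)) * (\<integral>\<^sup>+ y. ennreal (norm (g y)) \<partial>M2) \<partial>M1)"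
    by (simp add: nn_integral_cmult)
  also have "\<dots> = (\<integral>\<^sup>+ x. ennreal (norm (f x)) \<partial>M1) * (\<integral>\<^sup>+ y. ennreal (norm (g y)) \<partial>M2)"
    by (simp add: nn_integral_multc)
  also have "\<dots> < \<infinity>"
    using f g unfolding integrable_iff_bounded by (simp add: ennreal_mult_less_top)
  finally show I: "integrable (M1 \<Otimes>\<^sub>M M2) (\<lambda>\<omega>. f (fst \<omega>) * g (snd \<omega>))"
    unfolding integrable_iff_bounded by simp
  have "(\<integral>\<omega>. f (fst \<omega>) * g (snd \<omega>) \<partial>(M1 \<Otimes>\<^sub>M M2)) = (\<integral>x. (\<integral>y. f x * g y \<partial>M2) \<partial>M1)"
    using P.integral_fst'[OF I] by simp
  also have "\<dots> = (\<integral>x. f x * integral\<^sup>L M2 g \<partial>M1)" by simp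
  also have "\<dots> = integral\<^sup>L M1 f * integral\<^sup>L M2 g" by simp
  finally show "(\<integral>\<omega>. f (fst \<omega>) * g (snd \<omega>) \<partial>(M1 \<Otimes>\<^sub>M M2)) = integral\<^sup>L M1 f * integral\<^sup>L M2 g" .
qed

lemma N_prob: "prob_space std_normal"
  unfolding std_normal_def using prob_space_normal_density[of 1 0] by simp

lemma N_int: "integrable std_normal (\<lambda>x. x ^ k)"
  unfolding std_normal_def
  by (subst integrable_density) (auto intro: integrable_std_normal_moment)

lemma N_mean: "(\<integral>x. x \<partial>std_normal) = 0"
  unfolding std_normal_def
  using integral_std_normal_moment_odd[of 0] by (subst integral_density) auto

lemma N_sq: "(\<integral>x. x\<^sup>2 \<partial>std_normal) = 1"
  unfolding std_normal_def
  using integral_std_normal_moment_even[of 1] by (subst integral_density) auto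

lemma NN_prob: "prob_space (std_normal \<Otimes>\<^sub>M std_normal)"
  using N_prob by (simp add: prob_space_pair)

lemma hb: "integrable M f \<Longrightarrow> integral\<^sup>L M f = c \<Longrightarrow> has_bochner_integral M f c"
  by (simp add: has_bochner_integral_iff)

lemma model_quad:
  fixes u :: "'x \<Rightarrow> real"
  assumes PX: "prob_space PX" and um: "u \<in> borel_measurable PX"
    and ui: "integrable PX (\<lambda>x. (u x)\<^sup>2)"
  shows "(\<integral>\<omega>. (u (fst \<omega>) + a * fst (snd \<omega>) + b * snd (snd \<omega>))\<^sup>2 \<partial>model_space PX)
         = integral\<^sup>L PX (\<lambda>x. (u x)\<^sup>2) + a\<^sup>2 + b\<^sup>2"
proof -
  interpret P: prob_space PX by (rule PX)
  have u1: "integrable PX u" using P.square_integrable_imp_integrable[OF um] ui by simp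
  have N1: "integrable std_normal (\<lambda>x. x)" using N_int[of 1] by simp
  have N2: "integrable std_normal (\<lambda>x. x\<^sup>2)" using N_int[of 2] by simp
  have c1: "integrable std_normal (\<lambda>x. 1::real)"
    using finite_measure.integrable_const[OF prob_space.finite_measure[OF N_prob]] by blast
  have c1': "integrable PX (\<lambda>x. 1::real)" by simp
  have c1'': "integrable (std_normal \<Otimes>\<^sub>M std_normal) (\<lambda>x. 1::real)"
    using finite_measure.integrable_const[OF prob_space.finite_measure[OF NN_prob]] by blast
  have i1NN: "integral\<^sup>L (std_normal \<Otimes>\<^sub>M std_normal) (\<lambda>x. 1::real) = 1"
    using prob_space.prob_space[OF NN_prob] by simp
  have i1N: "integral\<^sup>L std_normal (\<lambda>x. 1::real) = 1"
    using prob_space.prob_space[OF N_prob] by simp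
  note [simp] = prob_space.prob_space[OF N_prob] prob_space.prob_space[OF NN_prob] P.prob_space
  note pm = prod_mult[OF N_prob N_prob]
  note qm = prod_mult[OF PX NN_prob]
  have x2: "has_bochner_integral (std_normal \<Otimes>\<^sub>M std_normal) (\<lambda>p. (fst p)\<^sup>2) 1"
    using pm[OF N2 c1] by (intro hb) (auto simp: N_sq i1N)
  have y2: "has_bochner_integral (std_normal \<Otimes>\<^sub>M std_normal) (\<lambda>p. (snd p)\<^sup>2) 1"
    using pm[OF c1 N2] by (intro hb) (auto simp: N_sq i1N)
  have xy: "has_bochner_integral (std_normal \<Otimes>\<^sub>M std_normal) (\<lambda>p. fst p * snd p) 0"
    using pm[OF N1 N1] by (intro hb) (auto simp: N_mean)
  have x1: "has_bochner_integral (std_normal \<Otimes>\<^sub>M std_normal) (\<lambda>p. fst p) 0"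
    using pm[OF N1 c1] by (intro hb) (auto simp: N_mean)
  have y1: "has_bochner_integral (std_normal \<Otimes>\<^sub>M std_normal) (\<lambda>p. snd p) 0"
    using pm[OF c1 N1] by (intro hb) (auto simp: N_mean)
  have e1: "has_bochner_integral (model_space PX) (\<lambda>\<omega>. (u (fst \<omega>))\<^sup>2) (integral\<^sup>L PX (\<lambda>x. (u x)\<^sup>2))"
    using qm[OF ui c1''] unfolding model_space_def by (intro hb) (auto simp: i1NN)
  have e2: "has_bochner_integral (model_space PX) (\<lambda>\<omega>. (fst (snd \<omega>))\<^sup>2) 1"
    using qm[OF c1' x2[unfolded has_bochner_integral_iff, THEN conjunct1]] x2 unfolding model_space_def
    by (intro hb) (auto simp: has_bochner_integral_iff)
  have e3: "has_bochner_integral (model_space PX) (\<lambda>\<omega>. (snd (snd \<omega>))\<^sup>2) 1"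
    using qm[OF c1' y2[unfolded has_bochner_integral_iff, THEN conjunct1]] y2 unfolding model_space_def
    by (intro hb) (auto simp: has_bochner_integral_iff)
  have e4: "has_bochner_integral (model_space PX) (\<lambda>\<omega>. fst (snd \<omega>) * snd (snd \<omega>)) 0"
    using qm[OF c1' xy[unfolded has_bochner_integral_iff, THEN conjunct1]] xy unfolding model_space_def
    by (intro hb) (auto simp: has_bochner_integral_iff)
  have e5: "has_bochner_integral (model_space PX) (\<lambda>\<omega>. u (fst \<omega>) * fst (snd \<omega>)) 0"
    using qm[OF u1 x1[unfolded has_bochner_integral_iff, THEN conjunct1]] x1 unfolding model_space_def
    by (intro hb) (auto simp: has_bochner_integral_iff)
  have e6: "has_bochner_integral (model_space PX) (\<lambda>\<omega>. u (fst \<omega>) * snd (snd \<omega>)) 0"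
    using qm[OF u1 y1[unfolded has_bochner_integral_iff, THEN conjunct1]] y1 unfolding model_space_def
    by (intro hb) (auto simp: has_bochner_integral_iff)
  have "has_bochner_integral (model_space PX)
    (\<lambda>\<omega>. (u (fst \<omega>))\<^sup>2 + a\<^sup>2 * (fst (snd \<omega>))\<^sup>2 + b\<^sup>2 * (snd (snd \<omega>))\<^sup>2
         + (2*a*b) * (fst (snd \<omega>) * snd (snd \<omega>)) + (2*a) * (u (fst \<omega>) * fst (snd \<omega>))
         + (2*b) * (u (fst \<omega>) * snd (snd \<omega>)))
    (integral\<^sup>L PX (\<lambda>x. (u x)\<^sup>2) + a\<^sup>2 * 1 + b\<^sup>2 * 1 + (2*a*b) * 0 + (2*a) * 0 + (2*b) * 0)"
    by (intro has_bochner_integral_add has_bochner_integral_mult_right e1 e2 e3 e4 e5 e6)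
  then have "has_bochner_integral (model_space PX)
    (\<lambda>\<omega>. (u (fst \<omega>) + a * fst (snd \<omega>) + b * snd (snd \<omega>))\<^sup>2)
    (integral\<^sup>L PX (\<lambda>x. (u x)\<^sup>2) + a\<^sup>2 + b\<^sup>2)"
    by (rule has_bochner_integral_cong[THEN iffD1, rotated 3]) (auto simp: power2_eq_square algebra_simps)
  then show ?thesis by (rule has_bochner_integral_integral_eq)
qed



theorem proposition1:
  fixes PX :: "'x measure" and m mt :: "'x \<Rightarrow> real" and A \<sigma> :: real
  assumes "prob_space PX"
    and "A \<ge> 0" and "\<sigma> > 0"
    and "m \<in> borel_measurable PX" and "mt \<in> borel_measurable PX"
    and "integrable PX (\<lambda>x. (mt x - m x)\<^sup>2)"
  defines "Amt \<equiv> model_expect PX m A \<sigma> (\<lambda>x \<mu> z. (mt x - z)\<^sup>2) - \<sigma>\<^sup>2"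
  shows "model_expect PX m A \<sigma> (\<lambda>x \<mu> z. (tstar \<sigma> mt Amt x z - \<mu>)\<^sup>2)
           = (INF At\<in>{0..}. model_expect PX m A \<sigma> (\<lambda>x \<mu> z. (tstar \<sigma> mt At x z - \<mu>)\<^sup>2))
       \<and> (INF At\<in>{0..}. model_expect PX m A \<sigma> (\<lambda>x \<mu> z. (tstar \<sigma> mt At x z - \<mu>)\<^sup>2))
           = \<sigma>\<^sup>2 * Amt / (\<sigma>\<^sup>2 + Amt)
       \<and> model_expect PX m A \<sigma> (\<lambda>x \<mu> z. (tstar \<sigma> mt Amt x z - \<mu>)\<^sup>2)
           \<le> model_expect PX m A \<sigma> (\<lambda>x \<mu> z. (tstar \<sigma> mt A x z - \<mu>)\<^sup>2)"
  proof -
  define U where "U = integral\<^sup>L PX (\<lambda>x. (mt x - m x)\<^sup>2)"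
  have um: "(\<lambda>x. mt x - m x) \<in> borel_measurable PX" using assms(4,5) by measurable
  have U0: "U \<ge> 0" unfolding U_def by (rule integral_nonneg_AE) auto
  have sA: "(sqrt A)\<^sup>2 = A" using assms(2) by simp
  have "model_expect PX m A \<sigma> (\<lambda>x \<mu> z. (mt x - z)\<^sup>2)
      = (\<integral>\<omega>. ((mt (fst \<omega>) - m (fst \<omega>)) + (- sqrt A) * fst (snd \<omega>) + (- \<sigma>) * snd (snd \<omega>))\<^sup>2 \<partial>model_space PX)"
    unfolding model_expect_def model_X_def model_Z_def model_mu_def
    by (rule Bochner_Integration.integral_cong[OF refl]) (auto simp: algebra_simps)
  also have "\<dots> = U + A + \<sigma>\<^sup>2"
    using model_quad[OF assms(1) um assms(6), of "- sqrt A" "- \<sigma>"] sA by (simp only: U_def) simp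
  finally have AmtU: "Amt = U + A" unfolding Amt_def by simp
  have B0: "Amt \<ge> 0" using AmtU U0 assms(2) by simp
  define f where "f At = model_expect PX m A \<sigma> (\<lambda>x \<mu> z. (tstar \<sigma> mt At x z - \<mu>)\<^sup>2)" for At
  have fval: "f At = \<sigma>\<^sup>2 * (At\<^sup>2 + \<sigma>\<^sup>2 * Amt) / (\<sigma>\<^sup>2 + At)\<^sup>2" if At: "At \<ge> 0" for At
  proof -
    define c where "c = \<sigma>\<^sup>2 / (\<sigma>\<^sup>2 + At)"
    define w where "w = At / (\<sigma>\<^sup>2 + At)"
    have pos: "\<sigma>\<^sup>2 + At > 0" using assms(3) At by (simp add: add_pos_nonneg)
    have wc: "w = 1 - c" unfolding w_def c_def using pos by (simp add: field_simps)
    have ts: "tstar \<sigma> mt At x z = w * z + c * mt x" for x z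
      by (simp add: tstar_def w_def c_def)
    have cm: "(\<lambda>x. c * (mt x - m x)) \<in> borel_measurable PX" using um by measurable
    have ci: "integrable PX (\<lambda>x. (c * (mt x - m x))\<^sup>2)"
      using assms(6) by (simp add: power_mult_distrib)
    have "f At = (\<integral>\<omega>. (c * (mt (fst \<omega>) - m (fst \<omega>)) + (- c * sqrt A) * fst (snd \<omega>) + (w * \<sigma>) * snd (snd \<omega>))\<^sup>2 \<partial>model_space PX)"
      unfolding f_def model_expect_def model_X_def model_Z_def model_mu_def ts
      by (rule Bochner_Integration.integral_cong[OF refl]) (auto simp: wc algebra_simps)
    also have "\<dots> = integral\<^sup>L PX (\<lambda>x. (c * (mt x - m x))\<^sup>2) + (- c * sqrt A)\<^sup>2 + (w * \<sigma>)\<^sup>2"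
      by (rule model_quad[OF assms(1) cm ci])
    also have "integral\<^sup>L PX (\<lambda>x. (c * (mt x - m x))\<^sup>2) = c\<^sup>2 * U"
      unfolding U_def power_mult_distrib by simp
    also have "c\<^sup>2 * U + (- c * sqrt A)\<^sup>2 + (w * \<sigma>)\<^sup>2 = c\<^sup>2 * Amt + w\<^sup>2 * \<sigma>\<^sup>2"
      by (simp add: power_mult_distrib AmtU sA algebra_simps)
    also have "\<dots> = \<sigma>\<^sup>2 * (At\<^sup>2 + \<sigma>\<^sup>2 * Amt) / (\<sigma>\<^sup>2 + At)\<^sup>2"
      unfolding c_def w_def power_divide using pos by (simp add: divide_simps) (simp add: algebra_simps power2_eq_square power4_eq_xxxx)
    finally show ?thesis .
  qed
  have fB: "f Amt = \<sigma>\<^sup>2 * Amt / (\<sigma>\<^sup>2 + Amt)"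
  proof -
    have pos: "\<sigma>\<^sup>2 + Amt > 0" using assms(3) B0 by (simp add: add_pos_nonneg)
    have "\<sigma>\<^sup>2 * (Amt\<^sup>2 + \<sigma>\<^sup>2 * Amt) / (\<sigma>\<^sup>2 + Amt)\<^sup>2
        = (\<sigma>\<^sup>2 * Amt) * (\<sigma>\<^sup>2 + Amt) / ((\<sigma>\<^sup>2 + Amt) * (\<sigma>\<^sup>2 + Amt))"
      by (simp add: power2_eq_square algebra_simps)
    also have "\<dots> = \<sigma>\<^sup>2 * Amt / (\<sigma>\<^sup>2 + Amt)" using pos by simp
    finally show ?thesis using fval[OF B0] by simp
  qed
  have fle: "f Amt \<le> f At" if At: "At \<ge> 0" for At
  proof -
    have pos: "\<sigma>\<^sup>2 + At > 0" using assms(3) At by (simp add: add_pos_nonneg)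
    have pos2: "\<sigma>\<^sup>2 + Amt > 0" using assms(3) B0 by (simp add: add_pos_nonneg)
    have key: "\<sigma>\<^sup>2 * Amt * (\<sigma>\<^sup>2 + At)\<^sup>2 \<le> \<sigma>\<^sup>2 * (At\<^sup>2 + \<sigma>\<^sup>2 * Amt) * (\<sigma>\<^sup>2 + Amt)"
    proof -
      have "\<sigma>\<^sup>2 * (At\<^sup>2 + \<sigma>\<^sup>2 * Amt) * (\<sigma>\<^sup>2 + Amt) - \<sigma>\<^sup>2 * Amt * (\<sigma>\<^sup>2 + At)\<^sup>2
            = \<sigma>\<^sup>2 * \<sigma>\<^sup>2 * (At - Amt)\<^sup>2"
        by (simp add: power2_eq_square algebra_simps)
      also have "\<dots> \<ge> 0" by simp
      finally show ?thesis by simp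
    qed
    have "\<sigma>\<^sup>2 * Amt / (\<sigma>\<^sup>2 + Amt) \<le> \<sigma>\<^sup>2 * (At\<^sup>2 + \<sigma>\<^sup>2 * Amt) / (\<sigma>\<^sup>2 + At)\<^sup>2"
      using key pos pos2 by (simp add: divide_simps)
    then show ?thesis using fB fval[OF At] by simp
  qed
  have INF: "(INF At\<in>{0..}. f At) = f Amt"
  proof (rule antisym)
    show "(INF At\<in>{0..}. f At) \<le> f Amt"
      by (rule cINF_lower) (auto intro!: bdd_belowI2[where m="f Amt"] fle B0)
    show "f Amt \<le> (INF At\<in>{0..}. f At)"
      by (rule cINF_greatest) (auto intro: fle)
  qed
  show ?thesis
    using INF fB fle[OF assms(2)] unfolding f_def by simp
qed

end
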